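(* Let $X$ be an infinite-dimensional Banach space over $\mathbb{K}\in\{\mathbb{R},\mathbb{C}\}$, let $\varepsilon>0$, $n\in\mathbb{N}$, and $\varphi_1,\dots,\varphi_n\in X^*\setminus\{0\}$, and put $A=\{x\in X: |\varphi_i(x)|<\varepsilon\text{ for all }i=1,\dots,n\}$. Then: (i) $\dim\big(\bigcap_{i=1}^n\ker\varphi_i\big)=\dim X$, and every linear subspace $W\subset A$ with $\dim W<\dim X$ satisfies $W\subset\bigcap_{i=1}^n\ker\varphi_i$; consequently, for every cardinal $\alpha<\dim X$, $A$ is $(\alpha,\dim X)$-spaceable (with respect to the norm topology). (ii) There exists $x\in A$ such that no linear subspace $W$ of $X$ satisfies $x\in W\subset A\cup\{0\}$; in particular $A$ is not pointwise lineable (hence not pointwise spaceable).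
   Context: $X^*$ denotes the topological dual of $X$; $\dim$ denotes algebraic (Hamel) dimension. For a vector space $V$ and a cardinal $\alpha$, a subset $A\subset V$ is $\alpha$-lineable if $A\cup\{0\}$ contains a linear subspace of dimension $\alpha$. For cardinals $\alpha<\beta\le\dim V$, $A$ is $(\alpha,\beta)$-spaceable if $A$ is $\alpha$-lineable and for every linear subspace $W_\alpha\subset A\cup\{0\}$ with $\dim W_\alpha=\alpha$ there is a closed linear subspace $W_\beta$ with $\dim W_\beta=\beta$ and $W_\alpha\subset W_\beta\subset A\cup\{0\}$. $A$ is pointwise lineable if for each $x\in A$ there is an infinite-dimensional linear subspace $W_x$ with $x\in W_x\subset A\cup\{0\}$; pointwise spaceable is the same with $W_x$ required to be closed. *)

theory Defs
  imports "HOL-Analysis.Analysis"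
begin

text \<open>A Banach space over a scalar field 'k (which is isometrically isomorphic to R or C):
  the carrier type 'a is a (real) Banach space, and smult_K is a 'k-vector space
  structure on 'a that extends real scalar multiplication and is compatible with the norm.\<close>
definition K_banach :: "('k::real_normed_field \<Rightarrow> 'a::banach \<Rightarrow> 'a) \<Rightarrow> bool" where
  "K_banach smult_K \<longleftrightarrow> vector_space smult_K
     \<and> (\<forall>r x. smult_K (of_real r) x = r *\<^sub>R x)
     \<and> (\<forall>c x. norm (smult_K c x) = norm c * norm x)"

definition hamel_basis :: "('k::field \<Rightarrow> 'a::ab_group_add \<Rightarrow> 'a) \<Rightarrow> 'a set \<Rightarrow> 'a set \<Rightarrow> bool" where
  "hamel_basis smult_K V B \<longleftrightarrow> B \<subseteq> V \<and> \<not> module.dependent smult_K B \<and> module.span smult_K B = V"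

definition hdim :: "('k::field \<Rightarrow> 'a::ab_group_add \<Rightarrow> 'a) \<Rightarrow> 'a set \<Rightarrow> 'a rel" where
  "hdim smult_K V = card_of (SOME B. hamel_basis smult_K V B)"

definition lineable :: "('k::field \<Rightarrow> 'a::ab_group_add \<Rightarrow> 'a) \<Rightarrow> 'a set \<Rightarrow> 'c rel \<Rightarrow> bool" where
  "lineable smult_K A \<alpha> \<longleftrightarrow>
     (\<exists>W. module.subspace smult_K W \<and> W \<subseteq> A \<union> {0} \<and> (hdim smult_K W, \<alpha>) \<in> ordIso)"

definition spaceable :: "('k::field \<Rightarrow> 'a::{ab_group_add,topological_space} \<Rightarrow> 'a) \<Rightarrow> 'a set \<Rightarrow> 'c rel \<Rightarrow> 'd rel \<Rightarrow> bool" where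
  "spaceable smult_K A \<alpha> \<beta> \<longleftrightarrow>
     Card_order \<alpha> \<and> Card_order \<beta> \<and> (\<alpha>, \<beta>) \<in> ordLess \<and> (\<beta>, hdim smult_K UNIV) \<in> ordLeq \<and>
     lineable smult_K A \<alpha> \<and>
     (\<forall>W. module.subspace smult_K W \<and> W \<subseteq> A \<union> {0} \<and> (hdim smult_K W, \<alpha>) \<in> ordIso \<longrightarrow>
        (\<exists>W'. module.subspace smult_K W' \<and> closed W' \<and> (hdim smult_K W', \<beta>) \<in> ordIso \<and>
              W \<subseteq> W' \<and> W' \<subseteq> A \<union> {0}))"

definition infinite_dimensional :: "('k::field \<Rightarrow> 'a::ab_group_add \<Rightarrow> 'a) \<Rightarrow> 'a set \<Rightarrow> bool" where
  "infinite_dimensional smult_K W \<longleftrightarrow> \<not> (\<exists>B. finite B \<and> B \<subseteq> W \<and> module.span smult_K B = W)"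

definition pointwise_lineable :: "('k::field \<Rightarrow> 'a::ab_group_add \<Rightarrow> 'a) \<Rightarrow> 'a set \<Rightarrow> bool" where
  "pointwise_lineable smult_K A \<longleftrightarrow>
     (\<forall>x\<in>A. \<exists>W. module.subspace smult_K W \<and> infinite_dimensional smult_K W \<and> x \<in> W \<and> W \<subseteq> A \<union> {0})"

definition pointwise_spaceable :: "('k::field \<Rightarrow> 'a::{ab_group_add,topological_space} \<Rightarrow> 'a) \<Rightarrow> 'a set \<Rightarrow> bool" where
  "pointwise_spaceable smult_K A \<longleftrightarrow>
     (\<forall>x\<in>A. \<exists>W. module.subspace smult_K W \<and> closed W \<and> infinite_dimensional smult_K W \<and> x \<in> W \<and> W \<subseteq> A \<union> {0})"

end

theory Submission
  imports Defs "HOL-Algebra.Free_Abelian_Groups"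
begin

lemma fin_le_inf: "finite A \<Longrightarrow> infinite B \<Longrightarrow> card_of (A) \<le>o card_of (B)"
  using finite_ordLess_infinite[OF card_of_Well_order card_of_Well_order, of A B]
  by (simp add: Field_card_of ordLess_imp_ordLeq)

context vector_space begin

lemma span_fin_subset: "x \<in> span S \<Longrightarrow> \<exists>T. finite T \<and> T \<subseteq> S \<and> x \<in> span T"
proof (induction rule: span_induct_alt)
  case base then show ?case by (intro exI[of _ "{}"]) (auto simp: span_zero)
next
  case (step c x y)
  then obtain T where T: "finite T" "T \<subseteq> S" "y \<in> span T" by blast
  have "y \<in> span (insert x T)" using span_mono[of T "insert x T"] T by auto
  moreover have "x \<in> span (insert x T)" by (rule span_base) simp
  ultimately have "c *s x + y \<in> span (insert x T)" by (intro span_add span_scale)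
  then show ?case using T step(1) by (intro exI[of _ "insert x T"]) auto
qed

lemma indep_le:
  assumes ind: "independent B" and BS: "B \<subseteq> span S" and inf: "infinite S"
  shows "card_of (B) \<le>o card_of (S)"
proof -
  define U where "U = (\<lambda>T. {b\<in>B. b \<in> span T})"
  have "B \<subseteq> \<Union> (U ` Fpow S)"
  proof
    fix b assume b: "b \<in> B"
    then have "b \<in> span S" using BS by blast
    then obtain T where "finite T" "T \<subseteq> S" "b \<in> span T" using span_fin_subset by blast
    then have "T \<in> Fpow S" "b \<in> U T" using b unfolding U_def Fpow_def by auto
    then show "b \<in> \<Union> (U ` Fpow S)" by (rule UN_I)
  qed
  moreover have "card_of (\<Union>T \<in> Fpow S. U T) \<le>o card_of (S)"
  proof (rule card_of_UNION_ordLeq_infinite[OF inf])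
    show "card_of (Fpow S) \<le>o card_of (S)" using card_of_Fpow_infinite[OF inf] by (rule ordIso_imp_ordLeq)
    show "\<forall>T\<in>Fpow S. card_of (U T) \<le>o card_of (S)"
    proof
      fix T assume "T \<in> Fpow S"
      then have fT: "finite T" by (auto simp: Fpow_def)
      have "U T \<subseteq> B" unfolding U_def by blast
      then have "independent (U T)" by (rule independent_mono[OF ind])
      moreover have "U T \<subseteq> span T" unfolding U_def by blast
      ultimately have "finite (U T)" using independent_span_bound[OF fT] by simp
      then show "card_of (U T) \<le>o card_of (S)" using inf by (rule fin_le_inf)
    qed
  qed
  ultimately show ?thesis by (metis card_of_mono1 ordLeq_transitive)
qed

lemma basis_iso:
  assumes i1: "independent B1" and i2: "independent B2" and sp: "span B1 = span B2"
  shows "card_of (B1) =o card_of (B2)"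
proof -
  have s21: "B2 \<subseteq> span B1" using sp span_superset[of B2] by simp
  have s12: "B1 \<subseteq> span B2" using sp span_superset[of B1] by simp
  show ?thesis
  proof (cases "finite B1")
    case True
    have f2: "finite B2" "card B2 \<le> card B1" using independent_span_bound[OF True i2 s21] by auto
    have "card B1 \<le> card B2" using independent_span_bound[OF f2(1) i1 s12] by simp
    then have "card B1 = card B2" using f2(2) by linarith
    then obtain h where "bij_betw h B1 B2" using finite_same_card_bij[OF True f2(1)] by metis
    then show ?thesis using card_of_ordIso by metis
  next
    case False
    have inf2: "infinite B2"
    proof
      assume "finite B2"
      then have "finite B1" using independent_span_bound[OF _ i1 s12] by simp
      then show False using False by simp
    qed
    have "card_of (B1) \<le>o card_of (B2)" by (rule indep_le[OF i1 s12 inf2])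
    moreover have "card_of (B2) \<le>o card_of (B1)" by (rule indep_le[OF i2 s21 False])
    ultimately show ?thesis by (simp add: ordIso_iff_ordLeq)
  qed
qed

lemma hdim_basis:
  assumes "B \<subseteq> V" "independent B" "span B = V"
  shows "(hdim scale V, card_of B) \<in> ordIso"
proof -
  have ex: "\<exists>B. hamel_basis scale V B" using assms unfolding hamel_basis_def by auto
  define B' where "B' = (SOME B. hamel_basis scale V B)"
  have "hamel_basis scale V B'" unfolding B'_def by (rule someI_ex[OF ex])
  then have "independent B'" "span B' = V" unfolding hamel_basis_def by auto
  then have "card_of B' =o card_of B" using basis_iso[of B' B] assms by simp
  then show ?thesis unfolding hdim_def B'_def[symmetric] .
qed

lemma basis_of_subspace:
  assumes "subspace V" obtains B where "B \<subseteq> V" "independent B" "span B = V"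
proof -
  obtain B where B: "B \<subseteq> V" "independent B" "V \<subseteq> span B" using basis_exists[of V] by metis
  have "span B = V" by (rule span_subspace[OF B(1) B(3) assms])
  then show ?thesis using that B by simp
qed

end

theorem mainTheorem4:
  fixes smult_K :: "'k::real_normed_field \<Rightarrow> 'a::banach \<Rightarrow> 'a"
    and \<phi> :: "nat \<Rightarrow> 'a \<Rightarrow> 'k" and \<epsilon> :: real and n :: nat and A :: "'a set"
  assumes K: "(\<exists>e::'k \<Rightarrow> real. bij e \<and> (\<forall>x y. e (x + y) = e x + e y \<and> e (x * y) = e x * e y)
                \<and> (\<forall>x. norm (e x) = norm x))
            \<or> (\<exists>e::'k \<Rightarrow> complex. bij e \<and> (\<forall>x y. e (x + y) = e x + e y \<and> e (x * y) = e x * e y)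
                \<and> (\<forall>x. norm (e x) = norm x))"
    and X: "K_banach smult_K"
    and infdim: "infinite_dimensional smult_K UNIV"
    and eps: "\<epsilon> > 0"
    and n: "n \<ge> 1"
    and lin: "\<forall>i\<in>{1..n}. Vector_Spaces.linear smult_K (*) (\<phi> i)"
    and cont: "\<forall>i\<in>{1..n}. continuous_on UNIV (\<phi> i)"
    and nz: "\<forall>i\<in>{1..n}. \<phi> i \<noteq> (\<lambda>x. 0)"
    and A_def: "A = {x. \<forall>i\<in>{1..n}. norm (\<phi> i x) < \<epsilon>}"
  shows
    "((hdim smult_K (\<Inter>i\<in>{1..n}. {x. \<phi> i x = 0}), hdim smult_K UNIV) \<in> ordIso
      \<and> (\<forall>W. module.subspace smult_K W \<and> W \<subseteq> A \<and> (hdim smult_K W, hdim smult_K UNIV) \<in> ordLess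
             \<longrightarrow> W \<subseteq> (\<Inter>i\<in>{1..n}. {x. \<phi> i x = 0}))
      \<and> (\<forall>\<alpha>::'c rel. Card_order \<alpha> \<and> (\<alpha>, hdim smult_K UNIV) \<in> ordLess
             \<longrightarrow> spaceable smult_K A \<alpha> (hdim smult_K UNIV)))
     \<and> ((\<exists>x\<in>A. \<not> (\<exists>W. module.subspace smult_K W \<and> x \<in> W \<and> W \<subseteq> A \<union> {0}))
      \<and> \<not> pointwise_lineable smult_K A \<and> \<not> pointwise_spaceable smult_K A)"
proof -
  interpret vs: vector_space smult_K using X unfolding K_banach_def by simp
  have ofr: "\<And>r x. smult_K (of_real r) x = r *\<^sub>R x" using X unfolding K_banach_def by simp
  have phisc: "\<phi> i (smult_K c x) = c * \<phi> i x" if i: "i \<in> {1..n}" for i c x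
  proof -
    have L: "Vector_Spaces.linear smult_K (*) (\<phi> i)" using lin i by auto
    show ?thesis using L unfolding Vector_Spaces.linear_iff by auto
  qed
  have phiadd: "\<phi> i (x + y) = \<phi> i x + \<phi> i y" if i: "i \<in> {1..n}" for i x y
  proof -
    have L: "Vector_Spaces.linear smult_K (*) (\<phi> i)" using lin i by auto
    show ?thesis using L unfolding Vector_Spaces.linear_iff by auto
  qed
  have phi0: "\<And>i. i \<in> {1..n} \<Longrightarrow> \<phi> i 0 = 0"
  proof -
    fix i assume i: "i \<in> {1..n}"
    show "\<phi> i 0 = 0" using phisc[OF i, of 0 0] by simp
  qed
  have phidiff: "\<And>i x y. i \<in> {1..n} \<Longrightarrow> \<phi> i (x - y) = \<phi> i x - \<phi> i y"
  proof -
    fix i x y assume i: "i \<in> {1..n}"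
    have "\<phi> i (x - y) + \<phi> i y = \<phi> i x" using phiadd[OF i, of "x - y" y] by simp
    then show "\<phi> i (x - y) = \<phi> i x - \<phi> i y" by (simp add: eq_diff_eq)
  qed
  define KI where "KI = (\<lambda>I. (\<Inter>i\<in>I. {x. \<phi> i x = 0}))"
  define K where "K = KI {1..n}"
  have KIsub: "\<And>I. I \<subseteq> {1..n} \<Longrightarrow> vs.subspace (KI I)"
    unfolding vs.subspace_def KI_def
  proof (intro conjI allI ballI impI)
    fix I assume I: "I \<subseteq> {1..n}"
    show "0 \<in> (\<Inter>i\<in>I. {x. \<phi> i x = 0})" using phi0 I by auto
    fix x y assume x: "x \<in> (\<Inter>i\<in>I. {x. \<phi> i x = 0})" and y: "y \<in> (\<Inter>i\<in>I. {x. \<phi> i x = 0})"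
    show "x + y \<in> (\<Inter>i\<in>I. {x. \<phi> i x = 0})" using x y phiadd I by auto
  next
    fix I c x assume I: "I \<subseteq> {1..n}" and x: "x \<in> (\<Inter>i\<in>I. {x. \<phi> i x = 0})"
    show "smult_K c x \<in> (\<Inter>i\<in>I. {x. \<phi> i x = 0})" using x phisc I by auto
  qed
  have Ksub: "vs.subspace K" unfolding K_def by (rule KIsub) simp
  have Kclosed: "closed K" unfolding K_def KI_def
  proof (rule closed_INT, rule ballI)
    fix i assume "i \<in> {1..n}"
    then show "closed {x. \<phi> i x = 0}" using cont by (intro closed_Collect_eq) auto
  qed
  have KA: "K \<subseteq> A" unfolding K_def KI_def A_def using eps by auto
  have A0: "0 \<in> A" unfolding A_def using eps phi0 by auto
  have sub_ker: "\<And>W. vs.subspace W \<Longrightarrow> W \<subseteq> A \<Longrightarrow> W \<subseteq> K"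
  proof
    fix W w assume W: "vs.subspace W" "W \<subseteq> A" and w: "w \<in> W"
    show "w \<in> K" unfolding K_def KI_def
    proof (rule INT_I, rule CollectI, rule ccontr)
      fix i assume i: "i \<in> {1..n}" and nz: "\<phi> i w \<noteq> 0"
      define t where "t = \<epsilon> / norm (\<phi> i w)"
      have "smult_K (of_real t) w \<in> W" using vs.subspace_scale[OF W(1) w] .
      then have "smult_K (of_real t) w \<in> A" using W(2) by auto
      then have "norm (\<phi> i (smult_K (of_real t) w)) < \<epsilon>" using i unfolding A_def by auto
      moreover have "norm (\<phi> i (smult_K (of_real t) w)) = \<epsilon>"
      proof -
        have "norm (\<phi> i (smult_K (of_real t) w)) = \<bar>t\<bar> * norm (\<phi> i w)"
          using phisc[OF i] by (simp add: norm_mult)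
        also have "\<dots> = \<epsilon>" unfolding t_def using nz eps by simp
        finally show ?thesis .
      qed
      ultimately show False by simp
    qed
  qed
  have codim: "\<And>I. finite I \<Longrightarrow> I \<subseteq> {1..n} \<Longrightarrow> \<exists>F. finite F \<and> (\<forall>x. \<exists>k\<in>KI I. x - k \<in> vs.span F)"
  proof -
    fix I :: "nat set" assume "finite I" "I \<subseteq> {1..n}"
    then show "\<exists>F. finite F \<and> (\<forall>x. \<exists>k\<in>KI I. x - k \<in> vs.span F)"
    proof (induction I rule: finite_induct)
      case empty
      show ?case by (rule exI[of _ "{}"]) (auto simp: KI_def vs.span_zero)
    next
      case (insert j I)
      then obtain F where F: "finite F" "\<forall>x. \<exists>k\<in>KI I. x - k \<in> vs.span F" by auto
      have j: "j \<in> {1..n}" and I: "I \<subseteq> {1..n}" using insert by auto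
      have KIins: "KI (insert j I) = KI I \<inter> {x. \<phi> j x = 0}" unfolding KI_def by auto
      show ?case
      proof (cases "\<exists>y\<in>KI I. \<phi> j y \<noteq> 0")
        case True
        then obtain y where y: "y \<in> KI I" "\<phi> j y \<noteq> 0" by auto
        show ?thesis
        proof (intro exI conjI allI)
          show "finite (insert y F)" using F by simp
          fix x
          obtain k where k: "k \<in> KI I" "x - k \<in> vs.span F" using F by auto
          define k' where "k' = k - smult_K (\<phi> j k / \<phi> j y) y"
          have "k' \<in> KI I" unfolding k'_def
            by (intro vs.subspace_diff[OF KIsub[OF I]] k vs.subspace_scale[OF KIsub[OF I]] y)
          moreover have "\<phi> j k' = 0" unfolding k'_def using y(2) by (simp add: phidiff[OF j] phisc[OF j])
          ultimately have "k' \<in> KI (insert j I)" using KIins by simp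
          moreover have "x - k' \<in> vs.span (insert y F)"
          proof -
            have "x - k' = (x - k) + smult_K (\<phi> j k / \<phi> j y) y" unfolding k'_def by simp
            moreover have "x - k \<in> vs.span (insert y F)" using k(2) vs.span_mono[of F "insert y F"] by auto
            moreover have "smult_K (\<phi> j k / \<phi> j y) y \<in> vs.span (insert y F)"
              by (intro vs.span_scale vs.span_base) simp
            ultimately show ?thesis using vs.span_add by metis
          qed
          ultimately show "\<exists>k\<in>KI (insert j I). x - k \<in> vs.span (insert y F)" by auto
        qed
      next
        case False
        then have "KI (insert j I) = KI I" using KIins by auto
        then show ?thesis using F by auto
      qed
    qed
  qed
  obtain F where F: "finite F" "\<forall>x. \<exists>k\<in>K. x - k \<in> vs.span F"
    using codim[of "{1..n}"] unfolding K_def by auto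
  obtain BK where BK: "BK \<subseteq> K" "vs.independent BK" "vs.span BK = K"
    using vs.basis_of_subspace[OF Ksub] by metis
  obtain BX where BX: "vs.independent BX" "vs.span BX = UNIV"
    using vs.basis_of_subspace[OF vs.subspace_UNIV] by metis
  have hK: "(hdim smult_K K, card_of BK) \<in> ordIso" using vs.hdim_basis[OF BK] .
  have hX: "(hdim smult_K UNIV, card_of BX) \<in> ordIso" using vs.hdim_basis[OF _ BX] by simp
  have spanUF: "vs.span (BK \<union> F) = UNIV"
  proof -
    have "x \<in> vs.span (BK \<union> F)" for x
    proof -
      obtain k where k: "k \<in> K" "x - k \<in> vs.span F" using F(2) by metis
      have "k \<in> vs.span (BK \<union> F)" using k(1) BK(3) vs.span_mono[of BK "BK \<union> F"] by auto
      moreover have "x - k \<in> vs.span (BK \<union> F)" using k(2) vs.span_mono[of F "BK \<union> F"] by auto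
      ultimately have "k + (x - k) \<in> vs.span (BK \<union> F)" by (rule vs.span_add)
      then show ?thesis by simp
    qed
    then show ?thesis by auto
  qed
  have infX: "infinite BX"
  proof
    assume "finite BX"
    then show False using infdim BX(2) unfolding infinite_dimensional_def by auto
  qed
  have infK: "infinite BK"
  proof
    assume "finite BK"
    then have "finite (BK \<union> F)" using F(1) by simp
    then show False using infdim spanUF unfolding infinite_dimensional_def by auto
  qed
  have le1: "card_of BK \<le>o card_of BX" by (rule vs.indep_le[OF BK(2) _ infX]) (simp add: BX(2))
  have le2: "card_of BX \<le>o card_of (BK \<union> F)" by (rule vs.indep_le[OF BX(1)]) (use spanUF infK in auto)
  have le3: "card_of (BK \<union> F) \<le>o card_of BK"
  proof (rule card_of_Un_ordLeq_infinite_Field)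
    show "infinite (Field (card_of BK))" using infK by (simp add: Field_card_of)
    show "card_of BK \<le>o card_of BK" by (rule card_of_refl[THEN ordIso_imp_ordLeq])
    show "card_of F \<le>o card_of BK" using F(1) infK by (rule fin_le_inf)
    show "Card_order (card_of BK)" by (rule card_of_Card_order)
  qed
  have isoBK: "card_of BK =o card_of BX"
    using le1 ordLeq_transitive[OF le2 le3] by (simp add: ordIso_iff_ordLeq)
  have dimK: "(hdim smult_K K, hdim smult_K UNIV) \<in> ordIso"
    using ordIso_transitive[OF ordIso_transitive[OF hK isoBK] ordIso_symmetric[OF hX]] .
  have KAU: "A \<union> {0} = A" using A0 by auto
  have part1: "\<forall>\<alpha>::'c rel. Card_order \<alpha> \<and> (\<alpha>, hdim smult_K UNIV) \<in> ordLess
             \<longrightarrow> spaceable smult_K A \<alpha> (hdim smult_K UNIV)"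
  proof (intro allI impI)
    fix \<alpha> :: "'c rel" assume a: "Card_order \<alpha> \<and> (\<alpha>, hdim smult_K UNIV) \<in> ordLess"
    have CX: "Card_order (hdim smult_K UNIV)" unfolding hdim_def by (rule card_of_Card_order)
    have fa: "card_of (Field \<alpha>) =o \<alpha>" using a by (simp add: card_of_Field_ordIso)
    have Xlt: "card_of (Field \<alpha>) <o hdim smult_K UNIV" using ordIso_ordLess_trans[OF fa] a by simp
    have "card_of (Field \<alpha>) <o card_of BK"
      by (rule ordLess_ordIso_trans[OF Xlt ordIso_transitive[OF ordIso_symmetric[OF dimK] hK]])
    then have "card_of (Field \<alpha>) \<le>o card_of BK" by (rule ordLess_imp_ordLeq)
    then obtain f where f: "inj_on f (Field \<alpha>)" "f ` Field \<alpha> \<subseteq> BK"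
      using card_of_ordLeq[symmetric] by metis
    define S where "S = f ` Field \<alpha>"
    have Sind: "vs.independent S" unfolding S_def by (rule vs.independent_mono[OF BK(2) f(2)])
    have hS: "(hdim smult_K (vs.span S), card_of S) \<in> ordIso"
      by (rule vs.hdim_basis[OF vs.span_superset Sind refl])
    have "bij_betw f (Field \<alpha>) S" unfolding S_def using f(1) by (simp add: bij_betw_def)
    then have "card_of (Field \<alpha>) =o card_of S" using card_of_ordIso by metis
    then have "card_of S =o \<alpha>" using ordIso_transitive[OF ordIso_symmetric fa] by metis
    then have dW: "(hdim smult_K (vs.span S), \<alpha>) \<in> ordIso" by (rule ordIso_transitive[OF hS])
    have WK: "vs.span S \<subseteq> K" using vs.span_mono[OF f(2)] BK(3) unfolding S_def by simp
    have lin_a: "lineable smult_K A \<alpha>" unfolding lineable_def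
      using dW WK KA KAU vs.subspace_span[of S] by auto
    show "spaceable smult_K A \<alpha> (hdim smult_K UNIV)" unfolding spaceable_def
    proof (intro conjI allI impI)
      show "Card_order \<alpha>" using a by simp
      show "Card_order (hdim smult_K UNIV)" by (rule CX)
      show "\<alpha> <o hdim smult_K UNIV" using a by simp
      show "hdim smult_K UNIV \<le>o hdim smult_K UNIV" using CX by (rule ordLeq_refl)
      show "lineable smult_K A \<alpha>" by (rule lin_a)
      fix W assume W: "vs.subspace W \<and> W \<subseteq> A \<union> {0} \<and> hdim smult_K W =o \<alpha>"
      then have "W \<subseteq> K" using sub_ker KAU by auto
      then show "\<exists>W'. vs.subspace W' \<and> closed W' \<and> hdim smult_K W' =o hdim smult_K UNIV \<and>
              W \<subseteq> W' \<and> W' \<subseteq> A \<union> {0}"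
        using Ksub Kclosed dimK KA KAU by (intro exI[of _ K]) auto
    qed
  qed
  have one: "1 \<in> {1..n}" using n by simp
  obtain y where y: "\<phi> 1 y \<noteq> 0" using nz one by (meson ext)
  define Sm where "Sm = (\<Sum>i\<in>{1..n}. norm (\<phi> i y))"
  have Smpos: "Sm > 0" unfolding Sm_def
    using sum_nonneg[of "{1..n}" "\<lambda>i. norm (\<phi> i y)"] member_le_sum[of 1 "{1..n}" "\<lambda>i. norm (\<phi> i y)"] one y
    by (smt (verit) finite_atLeastAtMost norm_ge_zero zero_less_norm_iff)
  define t where "t = \<epsilon> / (2 * Sm)"
  have tpos: "t > 0" unfolding t_def using eps Smpos by simp
  define x0 where "x0 = smult_K (of_real t) y"
  have x0A: "x0 \<in> A" unfolding A_def
  proof (intro CollectI ballI)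
    fix i assume i: "i \<in> {1..n}"
    have "norm (\<phi> i x0) = t * norm (\<phi> i y)" unfolding x0_def using phisc[OF i] tpos by (simp add: norm_mult)
    also have "\<dots> \<le> t * Sm" unfolding Sm_def using tpos i
      by (intro mult_left_mono member_le_sum) auto
    also have "\<dots> = \<epsilon> / 2" unfolding t_def using Smpos by simp
    also have "\<dots> < \<epsilon>" using eps by simp
    finally show "norm (\<phi> i x0) < \<epsilon>" .
  qed
  have x0nz: "\<phi> 1 x0 \<noteq> 0" unfolding x0_def using phisc[OF one] tpos y by simp
  have noW: "\<not> (\<exists>W. vs.subspace W \<and> x0 \<in> W \<and> W \<subseteq> A \<union> {0})"
  proof
    assume "\<exists>W. vs.subspace W \<and> x0 \<in> W \<and> W \<subseteq> A \<union> {0}"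
    then obtain W where W: "vs.subspace W" "x0 \<in> W" "W \<subseteq> A" using KAU by auto
    then have "x0 \<in> K" using sub_ker by auto
    then show False using x0nz one unfolding K_def KI_def by auto
  qed
  have npl: "\<not> pointwise_lineable smult_K A" unfolding pointwise_lineable_def using x0A noW by auto
  have nps: "\<not> pointwise_spaceable smult_K A" unfolding pointwise_spaceable_def using x0A noW by auto
  have part0: "\<forall>W. vs.subspace W \<and> W \<subseteq> A \<and> (hdim smult_K W, hdim smult_K UNIV) \<in> ordLess
             \<longrightarrow> W \<subseteq> (\<Inter>i\<in>{1..n}. {x. \<phi> i x = 0})"
    using sub_ker unfolding K_def KI_def by auto
  show ?thesis using dimK part0 part1 x0A noW npl nps unfolding K_def KI_def by blast
qed

end
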